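(* Let $n\ge2$, $0<k_0<\infty$, and let $\mathbf{Q}$ be the $(n+1)\times(n+1)$ symmetric tridiagonal matrix with $Q_{11}=1+1/k_0$, $Q_{ll}=2$ for $l=2,\dots,n$, $Q_{n+1,n+1}=1$, $Q_{lm}=-1$ if $|l-m|=1$, and $Q_{lm}=0$ otherwise. Let $\mathbb{E}_q[z_{j1}],\dots,\mathbb{E}_q[z_{jn}]>0$ and $\mu_{q(1/\xi_j^2)}>0$, and set $$\boldsymbol{\Sigma}_{q(\omega_j)}=\big(\mathsf{Diag}(0,\mathbb{E}_q[z_{j1}],\dots,\mathbb{E}_q[z_{jn}])+\mu_{q(1/\xi_j^2)}\mathbf{Q}\big)^{-1}.$$ Then $\boldsymbol{\Sigma}_{q(\omega_j)}$ is a positive matrix, i.e. $[\boldsymbol{\Sigma}_{q(\omega_j)}]_{ik}\ge0$ for all $i,k$.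
   Context: In the paper, $\mathbb{E}_q[z_{jt}]$ are means of Pólya–Gamma variational factors and $\mu_{q(1/\xi_j^2)}$ is a variational mean of an inverse-gamma precision, so both are positive; $\boldsymbol{\Sigma}_{q(\omega_j)}$ is the covariance of the optimal Gaussian variational factor of $\boldsymbol{\omega}_j$. *)

theory Defs
  imports "Jordan_Normal_Form.Matrix"
begin

(* 0-based indexing: paper index l (1..n+1) corresponds to index l-1 here. *)
definition Qmat :: "nat \<Rightarrow> real \<Rightarrow> real mat" where
  "Qmat n k0 = mat (n+1) (n+1) (\<lambda>(l, m).
     if l = m then (if l = 0 then 1 + 1 / k0 else if l = n then 1 else 2)
     else if l = m + 1 \<or> m = l + 1 then -1 else 0)"

definition Dmat :: "nat \<Rightarrow> (nat \<Rightarrow> real) \<Rightarrow> real mat" where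
  "Dmat n Ez = mat (n+1) (n+1) (\<lambda>(l, m). if l = m \<and> l \<noteq> 0 then Ez l else 0)"

definition precision_mat :: "nat \<Rightarrow> real \<Rightarrow> (nat \<Rightarrow> real) \<Rightarrow> real \<Rightarrow> real mat" where
  "precision_mat n k0 Ez mu = Dmat n Ez + mu \<cdot>\<^sub>m Qmat n k0"

end

theory Submission
  imports Defs "Jordan_Normal_Form.Determinant"
begin

lemma maxprinc:
  fixes A :: "real mat" and x :: "real vec"
  assumes A: "A \<in> carrier_mat m m" and x: "x \<in> carrier_vec m"
    and off: "\<And>i j. i < m \<Longrightarrow> j < m \<Longrightarrow> i \<noteq> j \<Longrightarrow> A $$ (i,j) \<le> 0"
    and rs: "\<And>i. i < m \<Longrightarrow> 0 < (\<Sum>j<m. A $$ (i,j))"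
    and pos: "\<And>i. i < m \<Longrightarrow> 0 \<le> (A *\<^sub>v x) $ i"
  shows "\<forall>i<m. 0 \<le> x $ i"
proof (cases "m = 0")
  case True then show ?thesis by simp
next
  case False
  define a where "a = Min ((\<lambda>j. x $ j) ` {..<m})"
  have "a \<in> (\<lambda>j. x $ j) ` {..<m}" unfolding a_def using False by (intro Min_in) auto
  then obtain i where i: "i < m" "x $ i = a" by auto
  have le: "\<And>j. j < m \<Longrightarrow> x $ i \<le> x $ j" unfolding i(2) a_def by (intro Min_le) auto
  show ?thesis
  proof (rule ccontr)
    assume "\<not> ?thesis"
    then obtain j where "j < m" "x $ j < 0" by auto
    with le have neg: "x $ i < 0" by force
    have "(A *\<^sub>v x) $ i = (\<Sum>j<m. A $$ (i,j) * x $ j)"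
      using A x i by (simp add: scalar_prod_def lessThan_atLeast0)
    also have "\<dots> \<le> (\<Sum>j<m. A $$ (i,j) * x $ i)"
    proof (rule sum_mono)
      fix j assume j: "j \<in> {..<m}"
      show "A $$ (i,j) * x $ j \<le> A $$ (i,j) * x $ i"
      proof (cases "j = i")
        case False
        then have "A $$ (i,j) \<le> 0" using off i j by auto
        moreover have "x $ i \<le> x $ j" using le j by auto
        ultimately show ?thesis by (simp add: mult_left_mono_neg)
      qed simp
    qed
    also have "\<dots> = (\<Sum>j<m. A $$ (i,j)) * x $ i" by (simp add: sum_distrib_right)
    also have "\<dots> < 0" using rs[OF i(1)] neg by (simp add: mult_pos_neg)
    finally show False using pos[OF i(1)] by simp
  qed
qed

lemma Q_entry:
  assumes "i < n+1" "j < n+1"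
  shows "Qmat n k0 $$ (i,j) = (if j = i then (if i = 0 then 1 + 1 / k0 else if i = n then 1 else 2) else 0)
     + (if j = i+1 then -1 else 0) + (if 0 < i \<and> j = i - 1 then -1 else 0)"
  using assms unfolding Qmat_def by auto

lemma Q_rowsum:
  assumes "i < n+1" "n \<ge> 1"
  shows "(\<Sum>j<n+1. Qmat n k0 $$ (i,j)) = (if i = 0 then 1 / k0 else 0)"
proof -
  have "(\<Sum>j<n+1. Qmat n k0 $$ (i,j)) = (\<Sum>j<n+1. (if j = i then (if i = 0 then 1 + 1 / k0 else if i = n then 1 else 2) else 0)
     + (if j = i+1 then -1 else 0) + (if 0 < i \<and> j = i - 1 then -1 else 0))"
    using assms by (intro sum.cong) (auto simp: Q_entry)
  also have "\<dots> = (\<Sum>j<n+1. (if j = i then (if i = 0 then 1 + 1 / k0 else if i = n then 1 else 2) else 0))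
     + (\<Sum>j<n+1. (if j = i+1 then -1 else 0)) + (\<Sum>j<n+1. (if 0 < i \<and> j = i - 1 then -1 else 0))"
    by (simp add: sum.distrib)
  also have "\<dots> = (if i = 0 then 1 / k0 else 0)"
    using assms by (auto simp: sum.delta' sum.If_cases)
  finally show ?thesis .
qed

lemma P_entry:
  assumes "i < n+1" "j < n+1"
  shows "precision_mat n k0 Ez mu $$ (i,j) = (if i = j \<and> i \<noteq> 0 then Ez i else 0) + mu * Qmat n k0 $$ (i,j)"
  using assms unfolding precision_mat_def Dmat_def Qmat_def by auto

lemma P_carrier: "precision_mat n k0 Ez mu \<in> carrier_mat (n+1) (n+1)"
  unfolding precision_mat_def Dmat_def Qmat_def by auto

lemma P_rowsum:
  assumes "i < n+1" "n \<ge> 1"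
  shows "(\<Sum>j<n+1. precision_mat n k0 Ez mu $$ (i,j)) = (if i = 0 then mu / k0 else Ez i)"
proof -
  have "(\<Sum>j<n+1. precision_mat n k0 Ez mu $$ (i,j)) =
     (\<Sum>j<n+1. (if j = i then (if i \<noteq> 0 then Ez i else 0) else 0)) + mu * (\<Sum>j<n+1. Qmat n k0 $$ (i,j))"
  proof -
    have "(\<Sum>j<n+1. precision_mat n k0 Ez mu $$ (i,j)) =
     (\<Sum>j<n+1. (if j = i then (if i \<noteq> 0 then Ez i else 0) else 0) + mu * Qmat n k0 $$ (i,j))"
      using assms by (intro sum.cong) (auto simp: P_entry)
    then show ?thesis by (simp only: sum.distrib sum_distrib_left)
  qed
  also have "\<dots> = (if i = 0 then mu / k0 else Ez i)"
    using assms Q_rowsum[OF assms, of k0] by (simp add: sum.delta')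
  finally show ?thesis .
qed

theorem lemma2:
  fixes n :: nat and k0 mu :: real and Ez :: "nat \<Rightarrow> real"
  assumes "n \<ge> 2" and "0 < k0"
    and "\<And>t. 1 \<le> t \<Longrightarrow> t \<le> n \<Longrightarrow> 0 < Ez t"
    and "0 < mu"
  shows "invertible_mat (precision_mat n k0 Ez mu) \<and>
    (\<forall>S \<in> carrier_mat (n+1) (n+1).
       precision_mat n k0 Ez mu * S = 1\<^sub>m (n+1) \<and> S * precision_mat n k0 Ez mu = 1\<^sub>m (n+1)
       \<longrightarrow> (\<forall>i < n+1. \<forall>k < n+1. 0 \<le> S $$ (i, k)))"
proof -
  let ?P = "precision_mat n k0 Ez mu"
  have PC: "?P \<in> carrier_mat (n+1) (n+1)" by (rule P_carrier)
  have off: "?P $$ (i,j) \<le> 0" if "i < n+1" "j < n+1" "i \<noteq> j" for i j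
    using that assms(4) unfolding P_entry[OF that(1,2)] by (auto simp: Qmat_def)
  have rs: "0 < (\<Sum>j<n+1. ?P $$ (i,j))" if "i < n+1" for i
    using that assms P_rowsum[OF that, of k0 Ez mu] by auto
  have MP: "\<forall>i<n+1. 0 \<le> x $ i" if "x \<in> carrier_vec (n+1)" "\<And>i. i < n+1 \<Longrightarrow> 0 \<le> (?P *\<^sub>v x) $ i" for x
    by (rule maxprinc[OF PC that(1) off rs that(2)])
  have "det ?P \<noteq> 0"
  proof
    assume "det ?P = 0"
    then obtain v where v: "v \<in> carrier_vec (n+1)" "v \<noteq> 0\<^sub>v (n+1)" "?P *\<^sub>v v = 0\<^sub>v (n+1)"
      using det_0_iff_vec_prod_zero[OF PC] by auto
    have "\<forall>i<n+1. 0 \<le> v $ i" using MP[OF v(1)] v(3) by simp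
    moreover have "\<forall>i<n+1. 0 \<le> (-v) $ i"
    proof (rule MP)
      show "- v \<in> carrier_vec (n + 1)" using v by simp
      fix i assume i: "i < n+1"
      have "(?P *\<^sub>v (-v)) $ i = - ((?P *\<^sub>v v) $ i)" using i PC v(1) by simp
      then show "0 \<le> (?P *\<^sub>v (-v)) $ i" using v(3) i by simp
    qed
    ultimately have "v = 0\<^sub>v (n+1)" using v(1) by (intro eq_vecI) (auto intro: antisym)
    with v(2) show False by simp
  qed
  from det_non_zero_imp_unit[OF PC this, of undefined]
  obtain B where B: "B \<in> carrier_mat (n+1) (n+1)" "B * ?P = 1\<^sub>m (n+1)" "?P * B = 1\<^sub>m (n+1)"
    by (auto simp: Units_def ring_mat_def)
  have inv: "invertible_mat ?P"
    unfolding invertible_mat_def inverts_mat_def using PC B by (auto intro!: exI[of _ B])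
  have nn: "\<forall>i < n+1. \<forall>k < n+1. 0 \<le> S $$ (i, k)"
    if S: "S \<in> carrier_mat (n+1) (n+1)" "?P * S = 1\<^sub>m (n+1)" for S
  proof (intro allI impI)
    fix i k assume i: "i < n+1" and k: "k < n+1"
    have "\<forall>r<n+1. 0 \<le> col S k $ r"
    proof (rule MP)
      show "col S k \<in> carrier_vec (n+1)" by (rule col_carrier_vec[OF k S(1)])
      fix r assume r: "r < n+1"
      have "?P *\<^sub>v col S k = col (?P * S) k" using col_mult2[OF PC S(1) k] by (rule sym)
      also have "\<dots> = unit_vec (n+1) k" unfolding S(2) using k by (rule col_one)
      finally show "0 \<le> (?P *\<^sub>v col S k) $ r" using r k by simp
    qed
    then show "0 \<le> S $$ (i, k)" using i k S by simp
  qed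
  show ?thesis using inv nn by blast
qed

end
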